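(* Under the hypotheses and notation of the bridging theorem (two disjoint finite connected graphs $G_1=(V_1,E_1)$, $G_2=(V_2,E_2)$ with $n_i=|V_i|\ge2$, invertible distance matrices, total curvatures $k_i$, $Z=(2+k_1/n_1)(2+k_2/n_2)\neq4$, $K_{G_1}(u)\ne0$, $K_{G_2}(v)\neq0$, and $G$ obtained by adding the edge $\{u,v\}$, $u\in V_1$, $v\in V_2$), with $V=V_1\cup V_2$ and $\alpha=\frac{2(n_1+n_2)k_2}{n_1n_2(Z-4)}$, $\beta=\frac{2(n_1+n_2)k_1}{n_1n_2(Z-4)}$, we have $$K_G(V)=\frac{\alpha}{2}K_{G_1}(V_1)+\frac{\beta}{2}K_{G_2}(V_2)=\alpha K_{G_1}(V_1)=\beta K_{G_2}(V_2).$$ In particular, the total Steinerberger curvature of $G$ depends only on $n_1,n_2,k_1,k_2$ and not on the choice of the vertices $u\in V_1$, $v\in V_2$ joined by the bridge.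
   Context: All graphs are finite, simple, connected and undirected, with the combinatorial shortest-path distance $d$. For $G=(V,E)$ with $V=\{v_1,\dots,v_n\}$, let $D=(d(v_i,v_j))_{i,j=1}^n$ be its distance matrix and $\mathbf{1}_n\in\mathbb{R}^n$ the all-ones column vector. The Steinerberger curvature $K\in\mathbb{R}^n$ (written $K_i$ or $K(v_i)$) is defined as follows: if $DK=n\mathbf{1}_n$ has a unique solution, $K$ is that solution; if it has several solutions, $K$ is a solution for which $\min_i K_i$ is maximal; if it has no solution, $K=nD^\dagger\mathbf{1}_n$ with $D^\dagger$ the Moore–Penrose pseudoinverse. The total curvature of a vertex subset $W$ is $K(W)=\sum_{w\in W}K(w)$; $K_G$, $K_{G_1}$, $K_{G_2}$ denote the Steinerberger curvatures of $G$, $G_1$, $G_2$. *)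

theory Defs
  imports Complex_Main
begin

text \<open>Matrices/vectors indexed by V are functions on the vertex type,
  only their values on V matter.\<close>

definition simple_graph :: "'a set \<Rightarrow> ('a \<Rightarrow> 'a \<Rightarrow> bool) \<Rightarrow> bool" where
  "simple_graph V E \<longleftrightarrow> finite V \<and> V \<noteq> {} \<and>
     (\<forall>x y. E x y \<longrightarrow> x \<in> V \<and> y \<in> V) \<and>
     (\<forall>x y. E x y \<longrightarrow> E y x) \<and> (\<forall>x. \<not> E x x)"

definition is_walk :: "'a set \<Rightarrow> ('a \<Rightarrow> 'a \<Rightarrow> bool) \<Rightarrow> 'a list \<Rightarrow> bool" where
  "is_walk V E xs \<longleftrightarrow> xs \<noteq> [] \<and> set xs \<subseteq> V \<and>
     (\<forall>i. Suc i < length xs \<longrightarrow> E (xs ! i) (xs ! Suc i))"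

definition connected_graph :: "'a set \<Rightarrow> ('a \<Rightarrow> 'a \<Rightarrow> bool) \<Rightarrow> bool" where
  "connected_graph V E \<longleftrightarrow> simple_graph V E \<and>
     (\<forall>x\<in>V. \<forall>y\<in>V. \<exists>xs. is_walk V E xs \<and> hd xs = x \<and> last xs = y)"

definition graph_dist :: "'a set \<Rightarrow> ('a \<Rightarrow> 'a \<Rightarrow> bool) \<Rightarrow> 'a \<Rightarrow> 'a \<Rightarrow> nat" where
  "graph_dist V E x y = (LEAST k. \<exists>xs. is_walk V E xs \<and> hd xs = x \<and> last xs = y \<and> length xs = Suc k)"

definition dist_matrix :: "'a set \<Rightarrow> ('a \<Rightarrow> 'a \<Rightarrow> bool) \<Rightarrow> 'a \<Rightarrow> 'a \<Rightarrow> real" where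
  "dist_matrix V E i j = real (graph_dist V E i j)"

definition mmul :: "'a set \<Rightarrow> ('a \<Rightarrow> 'a \<Rightarrow> real) \<Rightarrow> ('a \<Rightarrow> 'a \<Rightarrow> real) \<Rightarrow> 'a \<Rightarrow> 'a \<Rightarrow> real" where
  "mmul V A B i j = (\<Sum>k\<in>V. A i k * B k j)"

definition mvec :: "'a set \<Rightarrow> ('a \<Rightarrow> 'a \<Rightarrow> real) \<Rightarrow> ('a \<Rightarrow> real) \<Rightarrow> 'a \<Rightarrow> real" where
  "mvec V A x i = (\<Sum>j\<in>V. A i j * x j)"

definition invertible_on :: "'a set \<Rightarrow> ('a \<Rightarrow> 'a \<Rightarrow> real) \<Rightarrow> bool" where
  "invertible_on V A \<longleftrightarrow> (\<exists>B. \<forall>i\<in>V. \<forall>j\<in>V.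
      mmul V A B i j = (if i = j then 1 else 0) \<and> mmul V B A i j = (if i = j then 1 else 0))"

definition pinv_on :: "'a set \<Rightarrow> ('a \<Rightarrow> 'a \<Rightarrow> real) \<Rightarrow> 'a \<Rightarrow> 'a \<Rightarrow> real" where
  "pinv_on V A = (THE P. (\<forall>i j. (i \<notin> V \<or> j \<notin> V) \<longrightarrow> P i j = 0) \<and>
      (\<forall>i\<in>V. \<forall>j\<in>V.
         mmul V (mmul V A P) A i j = A i j \<and>
         mmul V (mmul V P A) P i j = P i j \<and>
         mmul V A P i j = mmul V A P j i \<and>
         mmul V P A i j = mmul V P A j i))"

definition curv_solutions :: "'a set \<Rightarrow> ('a \<Rightarrow> 'a \<Rightarrow> bool) \<Rightarrow> ('a \<Rightarrow> real) set" where
  "curv_solutions V E = {K. (\<forall>i. i \<notin> V \<longrightarrow> K i = 0) \<and>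
      (\<forall>i\<in>V. mvec V (dist_matrix V E) K i = real (card V))}"

definition steinerberger_curv :: "'a set \<Rightarrow> ('a \<Rightarrow> 'a \<Rightarrow> bool) \<Rightarrow> 'a \<Rightarrow> real" where
  "steinerberger_curv V E =
     (let S = curv_solutions V E in
      if (\<exists>!K. K \<in> S) then (THE K. K \<in> S)
      else if S \<noteq> {} then
        (SOME K. K \<in> S \<and> (\<forall>K'\<in>S. Min (K' ` V) \<le> Min (K ` V)))
      else (\<lambda>i. if i \<in> V then real (card V) *
                    (\<Sum>j\<in>V. pinv_on V (dist_matrix V E) i j) else 0))"

end

theory Submission
  imports Defs
begin


lemma walk_single[simp]: "is_walk V E [x] \<longleftrightarrow> x \<in> V"
  by (simp add: is_walk_def)

lemma walk_cons2: "is_walk V E (x#y#xs) \<longleftrightarrow> x \<in> V \<and> E x y \<and> is_walk V E (y#xs)"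
proof
  assume h: "is_walk V E (x#y#xs)"
  have a: "\<forall>i. Suc i < length (x#y#xs) \<longrightarrow> E ((x#y#xs) ! i) ((x#y#xs) ! Suc i)"
    using h unfolding is_walk_def by blast
  have "E ((x#y#xs)!0) ((x#y#xs)!Suc 0)" using a[rule_format, of 0] by simp
  then have exy: "E x y" by simp
  have "E ((y#xs) ! i) ((y#xs) ! Suc i)" if "Suc i < length (y#xs)" for i
    using a[rule_format, of "Suc i"] that by simp
  then have "is_walk V E (y#xs)" using h unfolding is_walk_def by auto
  then show "x \<in> V \<and> E x y \<and> is_walk V E (y#xs)" using h exy by (simp add: is_walk_def)
next
  assume h: "x \<in> V \<and> E x y \<and> is_walk V E (y#xs)"
  show "is_walk V E (x#y#xs)" unfolding is_walk_def
  proof (intro conjI allI impI)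
    show "set (x # y # xs) \<subseteq> V" using h by (auto simp: is_walk_def)
  next
    fix i assume "Suc i < length (x # y # xs)"
    then show "E ((x # y # xs) ! i) ((x # y # xs) ! Suc i)"
      using h by (cases i) (auto simp: is_walk_def)
  qed simp
qed

lemma walk_append:
  "is_walk V E xs \<Longrightarrow> is_walk V E ys \<Longrightarrow> E (last xs) (hd ys) \<Longrightarrow> is_walk V E (xs @ ys)"
proof (induction xs)
  case Nil then show ?case by (simp add: is_walk_def)
next
  case (Cons x xs)
  show ?case
  proof (cases xs)
    case Nil
    then obtain y ys' where "ys = y # ys'" using Cons.prems(2) by (cases ys) (auto simp: is_walk_def)
    then show ?thesis using Cons.prems Nil by (simp add: walk_cons2)
  next
    case (Cons y xs')
    then show ?thesis using Cons.prems Cons.IH by (simp add: walk_cons2)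
  qed
qed

lemma walk_mono: "is_walk V E xs \<Longrightarrow> V \<subseteq> V' \<Longrightarrow> (\<And>x y. E x y \<Longrightarrow> E' x y) \<Longrightarrow> is_walk V' E' xs"
  unfolding is_walk_def by auto

lemma walk_bound:
  fixes g :: "'a \<Rightarrow> nat"
  assumes "\<And>p q. p \<in> V \<Longrightarrow> q \<in> V \<Longrightarrow> E p q \<Longrightarrow> g q \<le> g p + 1"
  shows "is_walk V E xs \<Longrightarrow> g (last xs) \<le> g (hd xs) + (length xs - 1)"
proof (induction xs)
  case Nil then show ?case by (simp add: is_walk_def)
next
  case (Cons x xs)
  show ?case
  proof (cases xs)
    case Nil then show ?thesis by simp
  next
    case (Cons y xs')
    with Cons.prems have w: "x \<in> V" "E x y" "is_walk V E (y#xs')" by (auto simp: walk_cons2)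
    have "y \<in> V" using w(3) by (simp add: is_walk_def)
    have "g y \<le> g x + 1" using assms w \<open>y \<in> V\<close> by blast
    moreover have "g (last xs) \<le> g y + (length xs - 1)" using Cons.IH w(3) Cons by simp
    ultimately show ?thesis using Cons by simp
  qed
qed

lemma dist_le: "is_walk V E xs \<Longrightarrow> hd xs = x \<Longrightarrow> last xs = y \<Longrightarrow> graph_dist V E x y \<le> length xs - 1"
  unfolding graph_dist_def
  by (rule Least_le) (auto simp: is_walk_def intro!: exI[of _ xs])

lemma dist_walk: "connected_graph V E \<Longrightarrow> x \<in> V \<Longrightarrow> y \<in> V \<Longrightarrow>
  \<exists>xs. is_walk V E xs \<and> hd xs = x \<and> last xs = y \<and> length xs = Suc (graph_dist V E x y)"
proof -
  assume c: "connected_graph V E" "x \<in> V" "y \<in> V"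
  then obtain xs where xs: "is_walk V E xs" "hd xs = x" "last xs = y" unfolding connected_graph_def by blast
  then have "\<exists>k. \<exists>xs. is_walk V E xs \<and> hd xs = x \<and> last xs = y \<and> length xs = Suc k"
    by (intro exI[of _ "length xs - 1"] exI[of _ xs]) (auto simp: is_walk_def)
  then show ?thesis unfolding graph_dist_def by (rule LeastI_ex)
qed

lemma dist_self: "x \<in> V \<Longrightarrow> graph_dist V E x x = 0"
  using dist_le[of V E "[x]" x x] by simp

lemma dist_edge:
  assumes "connected_graph V E" "x \<in> V" "p \<in> V" "E p q"
  shows "graph_dist V E x q \<le> graph_dist V E x p + 1"
proof -
  obtain xs where xs: "is_walk V E xs" "hd xs = x" "last xs = p" "length xs = Suc (graph_dist V E x p)"
    using dist_walk[OF assms(1-3)] by blast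
  have sg: "simple_graph V E" using assms(1) unfolding connected_graph_def by simp
  have "q \<in> V" using sg assms(4) unfolding simple_graph_def by simp
  then have wq: "is_walk V E [q]" by simp
  have "E (last xs) (hd [q])" using xs(3) assms(4) by simp
  then have w: "is_walk V E (xs @ [q])" using walk_append[OF xs(1) wq] by blast
  have "xs \<noteq> []" using xs(4) by auto
  then have "hd (xs @ [q]) = x" "last (xs @ [q]) = q" using xs(2) by auto
  then have "graph_dist V E x q \<le> length (xs @ [q]) - 1" using dist_le[OF w] by blast
  then show ?thesis using xs(4) by simp
qed

lemma dist_eqI:
  assumes "is_walk V E xs" "hd xs = x" "last xs = y" "length xs = Suc m"
    and "\<And>ys. is_walk V E ys \<Longrightarrow> hd ys = x \<Longrightarrow> last ys = y \<Longrightarrow> m \<le> length ys - 1"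
  shows "graph_dist V E x y = m"
  unfolding graph_dist_def
proof (rule Least_equality)
  show "\<exists>xs. is_walk V E xs \<and> hd xs = x \<and> last xs = y \<and> length xs = Suc m" using assms by blast
next
  fix k assume "\<exists>xs. is_walk V E xs \<and> hd xs = x \<and> last xs = y \<and> length xs = Suc k"
  then obtain ys where "is_walk V E ys" "hd ys = x" "last ys = y" "length ys = Suc k" by blast
  then show "m \<le> k" using assms(5)[of ys] by simp
qed



lemma sum_if_eq: "finite A \<Longrightarrow> a \<in> A \<Longrightarrow> (\<Sum>j\<in>A. f j * (if j = a then c else 0)) = f a * (c::real)"
  by (simp add: if_distrib[of "\<lambda>t. f _ * t"] sum.delta' cong: if_cong)

lemma inv_inj:
  assumes fin: "finite V" and inv: "invertible_on V A"
    and h: "\<forall>i\<in>V. (\<Sum>j\<in>V. A i j * x j) = (\<Sum>j\<in>V. A i j * y j)"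
  shows "\<forall>i\<in>V. x i = y i"
proof -
  obtain B where B: "\<forall>i\<in>V. \<forall>j\<in>V. mmul V A B i j = (if i = j then 1 else 0) \<and> mmul V B A i j = (if i = j then 1 else 0)"
    using inv unfolding invertible_on_def by blast
  have key: "z i = (\<Sum>k\<in>V. B i k * (\<Sum>l\<in>V. A k l * z l))" if "i \<in> V" for z i
  proof -
    have "(\<Sum>k\<in>V. B i k * (\<Sum>l\<in>V. A k l * z l)) = (\<Sum>k\<in>V. \<Sum>l\<in>V. B i k * A k l * z l)"
      by (simp add: sum_distrib_left mult.assoc)
    also have "\<dots> = (\<Sum>l\<in>V. \<Sum>k\<in>V. B i k * A k l * z l)" by (rule sum.swap)
    also have "\<dots> = (\<Sum>l\<in>V. mmul V B A i l * z l)"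
      by (simp add: mmul_def sum_distrib_right)
    also have "\<dots> = (\<Sum>l\<in>V. (if i = l then z l else 0))"
      by (rule sum.cong) (use B that in auto)
    also have "\<dots> = z i" using fin that by simp
    finally show ?thesis by simp
  qed
  show ?thesis
  proof
    fix i assume i: "i \<in> V"
    have "x i = (\<Sum>k\<in>V. B i k * (\<Sum>l\<in>V. A k l * x l))" using key i by blast
    also have "\<dots> = (\<Sum>k\<in>V. B i k * (\<Sum>l\<in>V. A k l * y l))" using h by simp
    also have "\<dots> = y i" using key i by metis
    finally show "x i = y i" .
  qed
qed

lemma inv_solution:
  assumes fin: "finite V" and inv: "invertible_on V A"
  shows "\<exists>K. (\<forall>i. i \<notin> V \<longrightarrow> K i = 0) \<and> (\<forall>i\<in>V. (\<Sum>j\<in>V. A i j * K j) = c)"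
proof -
  obtain B where B: "\<forall>i\<in>V. \<forall>j\<in>V. mmul V A B i j = (if i = j then 1 else 0) \<and> mmul V B A i j = (if i = j then 1 else 0)"
    using inv unfolding invertible_on_def by blast
  define K where "K = (\<lambda>i. if i \<in> V then c * (\<Sum>j\<in>V. B i j) else 0)"
  have "(\<Sum>j\<in>V. A i j * K j) = c" if i: "i \<in> V" for i
  proof -
    have "A i j * K j = (\<Sum>k\<in>V. c * (A i j * B j k))" if "j \<in> V" for j
    proof -
      have "A i j * K j = c * (A i j * (\<Sum>k\<in>V. B j k))" using that by (simp add: K_def)
      also have "\<dots> = (\<Sum>k\<in>V. c * (A i j * B j k))" by (simp only: sum_distrib_left)
      finally show ?thesis .
    qed
    then have "(\<Sum>j\<in>V. A i j * K j) = (\<Sum>j\<in>V. \<Sum>k\<in>V. c * (A i j * B j k))"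
      by (rule sum.cong[OF refl])
    also have "\<dots> = (\<Sum>k\<in>V. \<Sum>j\<in>V. c * (A i j * B j k))" by (rule sum.swap)
    also have "\<dots> = (\<Sum>k\<in>V. c * mmul V A B i k)" by (simp add: mmul_def sum_distrib_left)
    also have "\<dots> = (\<Sum>k\<in>V. if i = k then c else 0)" by (rule sum.cong) (use B i in auto)
    also have "\<dots> = c" using fin i by simp
    finally show ?thesis .
  qed
  then show ?thesis by (intro exI[of _ K]) (auto simp: K_def)
qed

lemma curv_eq:
  assumes "K \<in> curv_solutions V E" "\<forall>K'\<in>curv_solutions V E. K' = K"
  shows "steinerberger_curv V E = K"
proof -
  have ex1: "\<exists>!K. K \<in> curv_solutions V E"
  proof (rule ex1I[of _ K])
    show "K \<in> curv_solutions V E" using assms(1) .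
  next
    fix K' assume "K' \<in> curv_solutions V E" then show "K' = K" using assms(2) by blast
  qed
  have "steinerberger_curv V E = (THE K. K \<in> curv_solutions V E)"
    unfolding steinerberger_curv_def Let_def using ex1 by (rule if_P)
  also have "\<dots> = K" using assms by (intro the_equality) blast+
  finally show ?thesis .
qed

lemma curv_inv:
  assumes fin: "finite V" and inv: "invertible_on V (dist_matrix V E)"
  shows "(\<forall>i. i \<notin> V \<longrightarrow> steinerberger_curv V E i = 0) \<and>
    (\<forall>i\<in>V. (\<Sum>j\<in>V. dist_matrix V E i j * steinerberger_curv V E j) = real (card V))"
proof -
  obtain K where K: "(\<forall>i. i \<notin> V \<longrightarrow> K i = 0)" "\<forall>i\<in>V. (\<Sum>j\<in>V. dist_matrix V E i j * K j) = real (card V)"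
    using inv_solution[OF fin inv] by blast
  have KS: "K \<in> curv_solutions V E" using K by (simp add: curv_solutions_def mvec_def)
  have "\<forall>K'\<in>curv_solutions V E. K' = K"
  proof
    fix K' assume "K' \<in> curv_solutions V E"
    then have K': "(\<forall>i. i \<notin> V \<longrightarrow> K' i = 0)" "\<forall>i\<in>V. (\<Sum>j\<in>V. dist_matrix V E i j * K' j) = real (card V)"
      by (auto simp: curv_solutions_def mvec_def)
    have "\<forall>i\<in>V. K' i = K i" using inv_inj[OF fin inv] K'(2) K(2) by simp
    then show "K' = K"
    proof (intro ext)
      fix i show "K' i = K i" using K(1) K'(1) \<open>\<forall>i\<in>V. K' i = K i\<close> by (cases "i \<in> V") auto
    qed
  qed
  then have "steinerberger_curv V E = K" using curv_eq KS by blast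
  then show ?thesis using K by simp
qed



lemma lin_sum: "(\<Sum>j\<in>A. M j * (c * K j)) = c * (\<Sum>j\<in>A. M j * K j)" for c :: real
  by (subst sum_distrib_left) (simp add: mult.left_commute)

lemma sum_minus_if: "finite A \<Longrightarrow> a \<in> A \<Longrightarrow>
   (\<Sum>j\<in>A. M j * (c * K j - (if j = a then d else 0))) = c * (\<Sum>j\<in>A. M j * K j) - M a * d" for c d :: real
  by (simp add: right_diff_distrib sum_subtractf lin_sum sum_if_eq)

lemma sum_minus_if': "finite A \<Longrightarrow> a \<in> A \<Longrightarrow>
   (\<Sum>j\<in>A. (c * K j - (if j = a then d else 0))) = c * (\<Sum>j\<in>A. K j) - d" for c d :: real
  using sum_minus_if[of A a "\<lambda>_. 1" c K d] by simp

lemma bridge_hom: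
  fixes D1 D2 :: "'a \<Rightarrow> 'a \<Rightarrow> real" and K1 K2 x :: "'a \<Rightarrow> real"
  assumes fin1: "finite V1" and fin2: "finite V2"
    and inv1: "invertible_on V1 D1" and inv2: "invertible_on V2 D2"
    and u: "u \<in> V1" and v: "v \<in> V2" and Duu: "D1 u u = 0" and Dvv: "D2 v v = 0"
    and S1: "\<forall>i\<in>V1. (\<Sum>j\<in>V1. D1 i j * K1 j) = n1" and S2: "\<forall>i\<in>V2. (\<Sum>j\<in>V2. D2 i j * K2 j) = n2"
    and nz1: "n1 \<noteq> 0" and nz2: "n2 \<noteq> 0"
    and det: "2*k1*n2 + 2*k2*n1 + k1*k2 \<noteq> 0"
    and k1: "k1 = (\<Sum>j\<in>V1. K1 j)" and k2: "k2 = (\<Sum>j\<in>V2. K2 j)"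
    and h1: "\<forall>i\<in>V1. (\<Sum>j\<in>V1. D1 i j * x j) + (\<Sum>j\<in>V2. (D1 i u + 1 + D2 v j) * x j) = 0"
    and h2: "\<forall>i\<in>V2. (\<Sum>j\<in>V1. (D2 i v + 1 + D1 u j) * x j) + (\<Sum>j\<in>V2. D2 i j * x j) = 0"
  shows "(\<forall>j\<in>V1. x j = 0) \<and> (\<forall>j\<in>V2. x j = 0)"
proof -
  define s1 where "s1 = (\<Sum>j\<in>V1. x j)"
  define s2 where "s2 = (\<Sum>j\<in>V2. x j)"
  define w where "w = (\<Sum>j\<in>V2. D2 v j * x j)"
  define w' where "w' = (\<Sum>j\<in>V1. D1 u j * x j)"
  define c1 where "c1 = -(s2 + w)/n1"
  define c2 where "c2 = -(s1 + w')/n2"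
  have c1n: "c1 * n1 = -(s2 + w)" using nz1 by (simp add: c1_def)
  have c2n: "c2 * n2 = -(s1 + w')" using nz2 by (simp add: c2_def)
  have e1: "\<forall>i\<in>V1. (\<Sum>j\<in>V1. D1 i j * (x j + (if j = u then s2 else 0))) = (\<Sum>j\<in>V1. D1 i j * (c1 * K1 j))"
  proof
    fix i assume i: "i \<in> V1"
    have a: "(\<Sum>j\<in>V2. (D1 i u + 1 + D2 v j) * x j) = (D1 i u + 1) * s2 + w"
      by (simp add: s2_def w_def distrib_right sum.distrib sum_distrib_left)
    have b: "(\<Sum>j\<in>V1. D1 i j * (x j + (if j = u then s2 else 0))) = (\<Sum>j\<in>V1. D1 i j * x j) + D1 i u * s2"
      by (simp add: distrib_left sum.distrib sum_if_eq[OF fin1 u])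
    have c: "(\<Sum>j\<in>V1. D1 i j * (c1 * K1 j)) = c1 * n1"
      using S1 i by (simp add: lin_sum)
    show "(\<Sum>j\<in>V1. D1 i j * (x j + (if j = u then s2 else 0))) = (\<Sum>j\<in>V1. D1 i j * (c1 * K1 j))"
    proof -
      have h0: "(\<Sum>j\<in>V1. D1 i j * x j) + (\<Sum>j\<in>V2. (D1 i u + 1 + D2 v j) * x j) = 0" using h1 i by blast
      have d: "(D1 i u + 1) * s2 = D1 i u * s2 + s2" by (simp add: distrib_right)
      show ?thesis unfolding b c using h0 a d c1n by linarith
    qed
  qed
  have e2: "\<forall>i\<in>V2. (\<Sum>j\<in>V2. D2 i j * (x j + (if j = v then s1 else 0))) = (\<Sum>j\<in>V2. D2 i j * (c2 * K2 j))"
  proof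
    fix i assume i: "i \<in> V2"
    have a: "(\<Sum>j\<in>V1. (D2 i v + 1 + D1 u j) * x j) = (D2 i v + 1) * s1 + w'"
      by (simp add: s1_def w'_def distrib_right sum.distrib sum_distrib_left)
    have b: "(\<Sum>j\<in>V2. D2 i j * (x j + (if j = v then s1 else 0))) = (\<Sum>j\<in>V2. D2 i j * x j) + D2 i v * s1"
      by (simp add: distrib_left sum.distrib sum_if_eq[OF fin2 v])
    have c: "(\<Sum>j\<in>V2. D2 i j * (c2 * K2 j)) = c2 * n2"
      using S2 i by (simp add: lin_sum)
    show "(\<Sum>j\<in>V2. D2 i j * (x j + (if j = v then s1 else 0))) = (\<Sum>j\<in>V2. D2 i j * (c2 * K2 j))"
    proof -
      have h0: "(\<Sum>j\<in>V1. (D2 i v + 1 + D1 u j) * x j) + (\<Sum>j\<in>V2. D2 i j * x j) = 0" using h2 i by blast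
      have d: "(D2 i v + 1) * s1 = D2 i v * s1 + s1" by (simp add: distrib_right)
      show ?thesis unfolding b c using h0 a d c2n by linarith
    qed
  qed
  have X1: "\<forall>j\<in>V1. x j = c1 * K1 j - (if j = u then s2 else 0)"
    using inv_inj[OF fin1 inv1 e1] by (simp add: algebra_simps)
  have X2: "\<forall>j\<in>V2. x j = c2 * K2 j - (if j = v then s1 else 0)"
    using inv_inj[OF fin2 inv2 e2] by (simp add: algebra_simps)
  have s1e: "s1 = c1 * k1 - s2"
  proof -
    have "s1 = (\<Sum>j\<in>V1. c1 * K1 j - (if j = u then s2 else 0))"
      unfolding s1_def using X1 by (intro sum.cong) auto
    then show ?thesis using sum_minus_if'[OF fin1 u] k1 by simp
  qed
  have s2e: "s2 = c2 * k2 - s1"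
  proof -
    have "s2 = (\<Sum>j\<in>V2. c2 * K2 j - (if j = v then s1 else 0))"
      unfolding s2_def using X2 by (intro sum.cong) auto
    then show ?thesis using sum_minus_if'[OF fin2 v] k2 by simp
  qed
  have we: "w = c2 * n2"
  proof -
    have "w = (\<Sum>j\<in>V2. D2 v j * (c2 * K2 j - (if j = v then s1 else 0)))"
      unfolding w_def using X2 by (intro sum.cong) auto
    then show ?thesis using sum_minus_if[OF fin2 v] S2 v Dvv by simp
  qed
  have we': "w' = c1 * n1"
  proof -
    have "w' = (\<Sum>j\<in>V1. D1 u j * (c1 * K1 j - (if j = u then s2 else 0)))"
      unfolding w'_def using X1 by (intro sum.cong) auto
    then show ?thesis using sum_minus_if[OF fin1 u] S1 u Duu by simp
  qed
  have l1: "c1 * n1 + c2 * n2 + s2 = 0" using c1n we by simp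
  have l2: "c1 * n1 + c2 * n2 + s1 = 0" using c2n we' by simp
  have ss: "s1 = s2" using l1 l2 by simp
  have q1: "2 * s1 = c1 * k1" using s1e ss by simp
  have q2: "2 * s1 = c2 * k2" using s2e ss by simp
  have "s1 * (2*k1*n2 + 2*k2*n1 + k1*k2) = k1*n2*(2*s1) + k2*n1*(2*s1) + s1*k1*k2"
    by (simp add: algebra_simps)
  also have "\<dots> = k1*n2*(c2*k2) + k2*n1*(c1*k1) + s1*k1*k2" using q1 q2 by simp
  also have "\<dots> = k1*k2*(c1*n1 + c2*n2 + s1)" by (simp add: algebra_simps)
  also have "\<dots> = 0" using l2 by simp
  finally have s10: "s1 = 0" using det by simp
  then have s20: "s2 = 0" using ss by simp
  have z1: "c1 * k1 = 0" using q1 s10 by simp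
  have z2: "c2 * k2 = 0" using q2 s10 by simp
  have l3: "c1 * n1 + c2 * n2 = 0" using l2 s10 by simp
  have add_eq_0_iff2: "c1 * n1 = -(c2*n2)" using l3 by linarith
  have add_eq_0_iff: "c2 * n2 = -(c1*n1)" using l3 by linarith
  have "c1 * (2*k1*n2 + 2*k2*n1 + k1*k2) = 2*n2*(c1*k1) + 2*k2*(c1*n1) + k2*(c1*k1)"
    by (simp add: algebra_simps)
  also have "\<dots> = 2*k2*(c1*n1)" unfolding z1 by simp
  also have "\<dots> = 2*k2*(-(c2*n2))" unfolding add_eq_0_iff2 by simp
  also have "\<dots> = -2*n2*(c2*k2)" by (simp add: algebra_simps)
  also have "\<dots> = 0" using z2 by simp
  finally have c10: "c1 = 0" using det by simp
  have "c2 * (2*k1*n2 + 2*k2*n1 + k1*k2) = 2*k1*(c2*n2) + 2*n1*(c2*k2) + k1*(c2*k2)"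
    by (simp add: algebra_simps)
  also have "\<dots> = 2*k1*(c2*n2)" unfolding z2 by simp
  also have "\<dots> = 2*k1*(-(c1*n1))" unfolding add_eq_0_iff by simp
  also have "\<dots> = -2*n1*(c1*k1)" by (simp add: algebra_simps)
  also have "\<dots> = 0" using z1 by simp
  finally have c20: "c2 = 0" using det by simp
  show ?thesis using X1 X2 c10 c20 s10 s20 by simp
qed

lemma bridge_exist:
  fixes D1 D2 :: "'a \<Rightarrow> 'a \<Rightarrow> real" and K1 K2 y :: "'a \<Rightarrow> real"
  assumes fin1: "finite V1" and fin2: "finite V2"
    and u: "u \<in> V1" and v: "v \<in> V2" and Duu: "D1 u u = 0" and Dvv: "D2 v v = 0"
    and S1: "\<forall>i\<in>V1. (\<Sum>j\<in>V1. D1 i j * K1 j) = n1" and S2: "\<forall>i\<in>V2. (\<Sum>j\<in>V2. D2 i j * K2 j) = n2"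
    and k1: "k1 = (\<Sum>j\<in>V1. K1 j)" and k2: "k2 = (\<Sum>j\<in>V2. K2 j)"
    and ab1: "a * n1 + b * n2 + a * k1 / 2 = n1 + n2" and ab2: "b * k2 = a * k1"
    and y1: "\<forall>j\<in>V1. y j = a * K1 j - (if j = u then a * k1 / 2 else 0)"
    and y2: "\<forall>j\<in>V2. y j = b * K2 j - (if j = v then a * k1 / 2 else 0)"
  shows "\<forall>i\<in>V1. (\<Sum>j\<in>V1. D1 i j * y j) + (\<Sum>j\<in>V2. (D1 i u + 1 + D2 v j) * y j) = n1 + n2"
    and "\<forall>i\<in>V2. (\<Sum>j\<in>V1. (D2 i v + 1 + D1 u j) * y j) + (\<Sum>j\<in>V2. D2 i j * y j) = n1 + n2"
    and "(\<Sum>j\<in>V1. y j) + (\<Sum>j\<in>V2. y j) = a * k1"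
proof -
  define S where "S = a * k1 / 2"
  have sy1: "(\<Sum>j\<in>V1. y j) = a * k1 - S"
  proof -
    have "(\<Sum>j\<in>V1. y j) = (\<Sum>j\<in>V1. a * K1 j - (if j = u then S else 0))"
      using y1 unfolding S_def by (intro sum.cong) auto
    then show ?thesis using sum_minus_if'[OF fin1 u] k1 by simp
  qed
  have sy2: "(\<Sum>j\<in>V2. y j) = S"
  proof -
    have "(\<Sum>j\<in>V2. y j) = (\<Sum>j\<in>V2. b * K2 j - (if j = v then S else 0))"
      using y2 unfolding S_def by (intro sum.cong) auto
    then show ?thesis using sum_minus_if'[OF fin2 v] k2 ab2 by (simp add: S_def)
  qed
  have my1: "(\<Sum>j\<in>V1. D1 i j * y j) = a * n1 - D1 i u * S" if i: "i \<in> V1" for i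
  proof -
    have "(\<Sum>j\<in>V1. D1 i j * y j) = (\<Sum>j\<in>V1. D1 i j * (a * K1 j - (if j = u then S else 0)))"
      using y1 unfolding S_def by (intro sum.cong) auto
    then show ?thesis using sum_minus_if[OF fin1 u] S1 i by simp
  qed
  have my2: "(\<Sum>j\<in>V2. D2 i j * y j) = b * n2 - D2 i v * S" if i: "i \<in> V2" for i
  proof -
    have "(\<Sum>j\<in>V2. D2 i j * y j) = (\<Sum>j\<in>V2. D2 i j * (b * K2 j - (if j = v then S else 0)))"
      using y2 unfolding S_def by (intro sum.cong) auto
    then show ?thesis using sum_minus_if[OF fin2 v] S2 i by simp
  qed
  have key: "a * n1 + b * n2 + S = n1 + n2" using ab1 by (simp add: S_def)
  show "\<forall>i\<in>V1. (\<Sum>j\<in>V1. D1 i j * y j) + (\<Sum>j\<in>V2. (D1 i u + 1 + D2 v j) * y j) = n1 + n2"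
  proof
    fix i assume i: "i \<in> V1"
    have "(\<Sum>j\<in>V2. (D1 i u + 1 + D2 v j) * y j) = (D1 i u + 1) * (\<Sum>j\<in>V2. y j) + (\<Sum>j\<in>V2. D2 v j * y j)"
      by (simp add: distrib_right sum.distrib sum_distrib_left)
    then show "(\<Sum>j\<in>V1. D1 i j * y j) + (\<Sum>j\<in>V2. (D1 i u + 1 + D2 v j) * y j) = n1 + n2"
      using my1[OF i] my2[OF v] sy2 Dvv key by (simp add: algebra_simps)
  qed
  show "\<forall>i\<in>V2. (\<Sum>j\<in>V1. (D2 i v + 1 + D1 u j) * y j) + (\<Sum>j\<in>V2. D2 i j * y j) = n1 + n2"
  proof
    fix i assume i: "i \<in> V2"
    have "(\<Sum>j\<in>V1. (D2 i v + 1 + D1 u j) * y j) = (D2 i v + 1) * (\<Sum>j\<in>V1. y j) + (\<Sum>j\<in>V1. D1 u j * y j)"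
      by (simp add: distrib_right sum.distrib sum_distrib_left)
    moreover have "a * k1 - S = S" by (simp add: S_def)
    ultimately show "(\<Sum>j\<in>V1. (D2 i v + 1 + D1 u j) * y j) + (\<Sum>j\<in>V2. D2 i j * y j) = n1 + n2"
      using my2[OF i] my1[OF u] sy1 Duu key by (simp add: algebra_simps)
  qed
  show "(\<Sum>j\<in>V1. y j) + (\<Sum>j\<in>V2. y j) = a * k1" using sy1 sy2 by (simp add: S_def)
qed



lemma bridge_dist:
  assumes G1: "connected_graph V1 E1" and G2: "connected_graph V2 E2"
    and disj: "V1 \<inter> V2 = {}" and u: "u \<in> V1" and v: "v \<in> V2"
    and E: "E = (\<lambda>x y. E1 x y \<or> E2 x y \<or> (x = u \<and> y = v) \<or> (x = v \<and> y = u))"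
    and x: "x \<in> V1 \<union> V2" and y: "y \<in> V1 \<union> V2"
  shows "graph_dist (V1 \<union> V2) E x y =
    (if x \<in> V1 then (if y \<in> V1 then graph_dist V1 E1 x y else graph_dist V1 E1 x u + 1 + graph_dist V2 E2 v y)
     else (if y \<in> V1 then graph_dist V2 E2 x v + 1 + graph_dist V1 E1 u y else graph_dist V2 E2 x y))"
    (is "_ = ?f x y")
proof -
  let ?V = "V1 \<union> V2"
  let ?d1 = "graph_dist V1 E1" and ?d2 = "graph_dist V2 E2"
  have sg1: "simple_graph V1 E1" using G1 by (simp add: connected_graph_def)
  have sg2: "simple_graph V2 E2" using G2 by (simp add: connected_graph_def)
  have E1V: "E1 p q \<Longrightarrow> p \<in> V1 \<and> q \<in> V1" for p q using sg1 by (simp add: simple_graph_def)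
  have E2V: "E2 p q \<Longrightarrow> p \<in> V2 \<and> q \<in> V2" for p q using sg2 by (simp add: simple_graph_def)
  have W1: "is_walk V1 E1 xs \<Longrightarrow> is_walk ?V E xs" for xs using walk_mono[of V1 E1 xs ?V E] by (auto simp: E)
  have W2: "is_walk V2 E2 xs \<Longrightarrow> is_walk ?V E xs" for xs using walk_mono[of V2 E2 xs ?V E] by (auto simp: E)
  have ne: "xs \<noteq> []" if "is_walk V' E' xs" for V' E' xs using that by (simp add: is_walk_def)
  have Euv: "E u v" "E v u" by (auto simp: E)
  have ex: "\<exists>xs. is_walk ?V E xs \<and> hd xs = x \<and> last xs = y \<and> length xs = Suc (?f x y)"
  proof (cases "x \<in> V1")
    case x1: True
    show ?thesis
    proof (cases "y \<in> V1")
      case True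
      then obtain xs where "is_walk V1 E1 xs" "hd xs = x" "last xs = y" "length xs = Suc (?d1 x y)"
        using dist_walk[OF G1 x1] by blast
      then show ?thesis using x1 True W1 by auto
    next
      case False
      then have y2: "y \<in> V2" using y by auto
      obtain xs where xs: "is_walk V1 E1 xs" "hd xs = x" "last xs = u" "length xs = Suc (?d1 x u)"
        using dist_walk[OF G1 x1 u] by blast
      obtain ys where ys: "is_walk V2 E2 ys" "hd ys = v" "last ys = y" "length ys = Suc (?d2 v y)"
        using dist_walk[OF G2 v y2] by blast
      have w: "is_walk ?V E (xs @ ys)" using walk_append[OF W1[OF xs(1)] W2[OF ys(1)]] xs ys Euv by simp
      have "hd (xs @ ys) = x" "last (xs @ ys) = y" using xs ys ne[OF xs(1)] ne[OF ys(1)] by auto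
      moreover have "length (xs @ ys) = Suc (?f x y)" using xs ys x1 False by simp
      ultimately show ?thesis using w by blast
    qed
  next
    case x1: False
    then have x2: "x \<in> V2" using x by auto
    show ?thesis
    proof (cases "y \<in> V1")
      case True
      obtain xs where xs: "is_walk V2 E2 xs" "hd xs = x" "last xs = v" "length xs = Suc (?d2 x v)"
        using dist_walk[OF G2 x2 v] by blast
      obtain ys where ys: "is_walk V1 E1 ys" "hd ys = u" "last ys = y" "length ys = Suc (?d1 u y)"
        using dist_walk[OF G1 u True] by blast
      have w: "is_walk ?V E (xs @ ys)" using walk_append[OF W2[OF xs(1)] W1[OF ys(1)]] xs ys Euv by simp
      have "hd (xs @ ys) = x" "last (xs @ ys) = y" using xs ys ne[OF xs(1)] ne[OF ys(1)] by auto
      moreover have "length (xs @ ys) = Suc (?f x y)" using xs ys x1 True by simp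
      ultimately show ?thesis using w by blast
    next
      case False
      then have y2: "y \<in> V2" using y by auto
      obtain xs where "is_walk V2 E2 xs" "hd xs = x" "last xs = y" "length xs = Suc (?d2 x y)"
        using dist_walk[OF G2 x2 y2] by blast
      then show ?thesis using x1 False W2 by auto
    qed
  qed
  have de1: "?d1 a q \<le> ?d1 a p + 1" if "a \<in> V1" "E1 p q" for a p q
    using dist_edge[OF G1 that(1) _ that(2)] E1V[OF that(2)] by blast
  have de2: "?d2 a q \<le> ?d2 a p + 1" if "a \<in> V2" "E2 p q" for a p q
    using dist_edge[OF G2 that(1) _ that(2)] E2V[OF that(2)] by blast
  have uv: "u \<notin> V2" "v \<notin> V1" using u v disj by auto
  have d0: "?d1 u u = 0" "?d2 v v = 0" using dist_self[OF u] dist_self[OF v] by auto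
  have step: "?f x q \<le> ?f x p + 1" if "p \<in> ?V" "q \<in> ?V" "E p q" for p q
  proof -
    have "E1 p q \<or> E2 p q \<or> (p = u \<and> q = v) \<or> (p = v \<and> q = u)" using that(3) by (simp add: E)
    then show ?thesis
    proof (elim disjE conjE)
      assume e: "E1 p q"
      then have pq: "p \<in> V1" "q \<in> V1" using E1V by auto
      show ?thesis
      proof (cases "x \<in> V1")
        case True then show ?thesis using pq de1[OF True e] by simp
      next
        case False then show ?thesis using pq de1[OF u e] by simp
      qed
    next
      assume e: "E2 p q"
      then have pq: "p \<in> V2" "q \<in> V2" "p \<notin> V1" "q \<notin> V1" using E2V disj by auto
      show ?thesis
      proof (cases "x \<in> V1")
        case True then show ?thesis using pq de2[OF v e] by simp
      next
        case False then have "x \<in> V2" using x by auto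
        then show ?thesis using pq de2[OF _ e] False by simp
      qed
    next
      assume "p = u" "q = v" then show ?thesis using u uv d0 by auto
    next
      assume "p = v" "q = u" then show ?thesis using u uv d0 by auto
    qed
  qed
  have fx0: "?f x x = 0" using x dist_self[of x V1 E1] dist_self[of x V2 E2] by auto
  show ?thesis
  proof -
    obtain xs where xs: "is_walk ?V E xs" "hd xs = x" "last xs = y" "length xs = Suc (?f x y)" using ex by blast
    show ?thesis
    proof (rule dist_eqI[OF xs])
      fix ys assume ys: "is_walk ?V E ys" "hd ys = x" "last ys = y"
      have "?f x (last ys) \<le> ?f x (hd ys) + (length ys - 1)"
        by (rule walk_bound[OF _ ys(1), of "?f x"]) (rule step)
      from this[unfolded ys(2,3)] have b: "?f x y \<le> ?f x x + (length ys - 1)" .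
      show "?f x y \<le> length ys - 1" using b fx0 by linarith
    qed
  qed
qed



theorem mainTheorem6:
  fixes V1 V2 :: "'a set" and E1 E2 :: "'a \<Rightarrow> 'a \<Rightarrow> bool" and u v :: 'a
  assumes G1: "connected_graph V1 E1" and G2: "connected_graph V2 E2"
    and disj: "V1 \<inter> V2 = {}"
    and n1: "card V1 \<ge> 2" and n2: "card V2 \<ge> 2"
    and inv1: "invertible_on V1 (dist_matrix V1 E1)"
    and inv2: "invertible_on V2 (dist_matrix V2 E2)"
    and u: "u \<in> V1" and v: "v \<in> V2"
    and Z: "(2 + (\<Sum>w\<in>V1. steinerberger_curv V1 E1 w) / real (card V1)) *
            (2 + (\<Sum>w\<in>V2. steinerberger_curv V2 E2 w) / real (card V2)) \<noteq> 4"
    and Ku: "steinerberger_curv V1 E1 u \<noteq> 0"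
    and Kv: "steinerberger_curv V2 E2 v \<noteq> 0"
  shows
    "let n1 = real (card V1); n2 = real (card V2);
         k1 = (\<Sum>w\<in>V1. steinerberger_curv V1 E1 w);
         k2 = (\<Sum>w\<in>V2. steinerberger_curv V2 E2 w);
         Z = (2 + k1 / n1) * (2 + k2 / n2);
         \<alpha> = 2 * (n1 + n2) * k2 / (n1 * n2 * (Z - 4));
         \<beta> = 2 * (n1 + n2) * k1 / (n1 * n2 * (Z - 4));
         V = V1 \<union> V2;
         E = (\<lambda>x y. E1 x y \<or> E2 x y \<or> (x = u \<and> y = v) \<or> (x = v \<and> y = u));
         KV = (\<Sum>w\<in>V. steinerberger_curv V E w)
     in KV = \<alpha> / 2 * k1 + \<beta> / 2 * k2 \<and>
        \<alpha> / 2 * k1 + \<beta> / 2 * k2 = \<alpha> * k1 \<and>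
        \<alpha> * k1 = \<beta> * k2"
proof -
  define N1 where "N1 = real (card V1)"
  define N2 where "N2 = real (card V2)"
  define K1 where "K1 = steinerberger_curv V1 E1"
  define K2 where "K2 = steinerberger_curv V2 E2"
  define k1 where "k1 = (\<Sum>w\<in>V1. K1 w)"
  define k2 where "k2 = (\<Sum>w\<in>V2. K2 w)"
  define Zv where "Zv = (2 + k1 / N1) * (2 + k2 / N2)"
  define a where "a = 2 * (N1 + N2) * k2 / (N1 * N2 * (Zv - 4))"
  define b where "b = 2 * (N1 + N2) * k1 / (N1 * N2 * (Zv - 4))"
  define V where "V = V1 \<union> V2"
  define E where "E = (\<lambda>x y. E1 x y \<or> E2 x y \<or> (x = u \<and> y = v) \<or> (x = v \<and> y = u))"
  define D1 where "D1 = dist_matrix V1 E1"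
  define D2 where "D2 = dist_matrix V2 E2"
  define D where "D = dist_matrix V E"
  have fin1: "finite V1" using G1 by (simp add: connected_graph_def simple_graph_def)
  have fin2: "finite V2" using G2 by (simp add: connected_graph_def simple_graph_def)
  have finV: "finite V" using fin1 fin2 by (simp add: V_def)
  have cardV: "real (card V) = N1 + N2" using fin1 fin2 disj by (simp add: V_def N1_def N2_def card_Un_disjoint)
  have N1p: "N1 > 0" using n1 by (simp add: N1_def)
  have N2p: "N2 > 0" using n2 by (simp add: N2_def)
  have C1: "(\<forall>i. i \<notin> V1 \<longrightarrow> K1 i = 0) \<and> (\<forall>i\<in>V1. (\<Sum>j\<in>V1. D1 i j * K1 j) = N1)"
    using curv_inv[OF fin1 inv1] by (simp add: K1_def D1_def N1_def)
  have C2: "(\<forall>i. i \<notin> V2 \<longrightarrow> K2 i = 0) \<and> (\<forall>i\<in>V2. (\<Sum>j\<in>V2. D2 i j * K2 j) = N2)"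
    using curv_inv[OF fin2 inv2] by (simp add: K2_def D2_def N2_def)
  have Duu: "D1 u u = 0" using dist_self[OF u] by (simp add: D1_def dist_matrix_def)
  have Dvv: "D2 v v = 0" using dist_self[OF v] by (simp add: D2_def dist_matrix_def)
  have Dform: "D i j = (if i \<in> V1 then (if j \<in> V1 then D1 i j else D1 i u + 1 + D2 v j)
     else (if j \<in> V1 then D2 i v + 1 + D1 u j else D2 i j))" if "i \<in> V" "j \<in> V" for i j
    using bridge_dist[OF G1 G2 disj u v E_def, of i j] that
    by (simp add: V_def D_def D1_def D2_def dist_matrix_def)
  have nv: "j \<in> V2 \<Longrightarrow> j \<notin> V1" for j using disj by auto
  have row1: "(\<Sum>j\<in>V. D i j * x j) = (\<Sum>j\<in>V1. D1 i j * x j) + (\<Sum>j\<in>V2. (D1 i u + 1 + D2 v j) * x j)"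
    if i: "i \<in> V1" for i x
  proof -
    have "(\<Sum>j\<in>V. D i j * x j) = (\<Sum>j\<in>V1. D i j * x j) + (\<Sum>j\<in>V2. D i j * x j)"
      unfolding V_def using fin1 fin2 disj by (rule sum.union_disjoint)
    also have "(\<Sum>j\<in>V1. D i j * x j) = (\<Sum>j\<in>V1. D1 i j * x j)"
      by (rule sum.cong) (use Dform i in \<open>auto simp: V_def\<close>)
    also have "(\<Sum>j\<in>V2. D i j * x j) = (\<Sum>j\<in>V2. (D1 i u + 1 + D2 v j) * x j)"
      by (rule sum.cong) (use Dform i nv in \<open>auto simp: V_def\<close>)
    finally show ?thesis .
  qed
  have row2: "(\<Sum>j\<in>V. D i j * x j) = (\<Sum>j\<in>V1. (D2 i v + 1 + D1 u j) * x j) + (\<Sum>j\<in>V2. D2 i j * x j)"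
    if i: "i \<in> V2" for i x
  proof -
    have iV1: "i \<notin> V1" using nv i .
    have "(\<Sum>j\<in>V. D i j * x j) = (\<Sum>j\<in>V1. D i j * x j) + (\<Sum>j\<in>V2. D i j * x j)"
      unfolding V_def using fin1 fin2 disj by (rule sum.union_disjoint)
    also have "(\<Sum>j\<in>V1. D i j * x j) = (\<Sum>j\<in>V1. (D2 i v + 1 + D1 u j) * x j)"
      by (rule sum.cong) (use Dform i iV1 in \<open>auto simp: V_def\<close>)
    also have "(\<Sum>j\<in>V2. D i j * x j) = (\<Sum>j\<in>V2. D2 i j * x j)"
      by (rule sum.cong) (use Dform i iV1 nv in \<open>auto simp: V_def\<close>)
    finally show ?thesis .
  qed
  define det where "det = 2*k1*N2 + 2*k2*N1 + k1*k2"
  have Pdet: "N1 * N2 * (Zv - 4) = det" using N1p N2p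
    by (simp add: Zv_def det_def field_simps)
  have Z4: "Zv \<noteq> 4" using Z by (simp add: Zv_def k1_def k2_def K1_def K2_def N1_def N2_def)
  have detnz: "det \<noteq> 0" using Pdet Z4 N1p N2p by auto
  have a_eq: "a = 2 * (N1 + N2) * k2 / det" by (simp add: a_def Pdet)
  have b_eq: "b = 2 * (N1 + N2) * k1 / det" by (simp add: b_def Pdet)
  have ab2: "b * k2 = a * k1" by (simp add: a_eq b_eq)
  have ab1: "a * N1 + b * N2 + a * k1 / 2 = N1 + N2"
  proof -
    have "a * N1 + b * N2 + a * k1 / 2 = (2*(N1+N2)*k2*N1 + 2*(N1+N2)*k1*N2 + (N1+N2)*k2*k1) / det"
      using detnz by (simp add: a_eq b_eq field_simps)
    also have "2*(N1+N2)*k2*N1 + 2*(N1+N2)*k1*N2 + (N1+N2)*k2*k1 = (N1 + N2) * det"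
      by (simp add: det_def algebra_simps)
    finally show ?thesis using detnz by simp
  qed
  define Ks where "Ks = (\<lambda>j. if j \<in> V1 then a * K1 j - (if j = u then a * k1 / 2 else 0)
                         else if j \<in> V2 then b * K2 j - (if j = v then a * k1 / 2 else 0) else 0)"
  have y1: "\<forall>j\<in>V1. Ks j = a * K1 j - (if j = u then a * k1 / 2 else 0)" by (simp add: Ks_def)
  have y2: "\<forall>j\<in>V2. Ks j = b * K2 j - (if j = v then a * k1 / 2 else 0)" using nv by (simp add: Ks_def)
  note BE = bridge_exist[OF fin1 fin2 u v Duu Dvv conjunct2[OF C1] conjunct2[OF C2] k1_def k2_def ab1 ab2 y1 y2]
  have KsS: "Ks \<in> curv_solutions V E"
    unfolding curv_solutions_def mvec_def
  proof (intro CollectI conjI allI impI ballI)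
    fix i assume "i \<notin> V" then show "Ks i = 0" by (simp add: Ks_def V_def)
  next
    fix i assume i: "i \<in> V"
    show "(\<Sum>j\<in>V. dist_matrix V E i j * Ks j) = real (card V)"
    proof (cases "i \<in> V1")
      case True then show ?thesis using row1[OF True, of Ks] BE(1) cardV by (simp add: D_def)
    next
      case False then have "i \<in> V2" using i by (simp add: V_def)
      then show ?thesis using row2[of i Ks] BE(2) cardV by (simp add: D_def)
    qed
  qed
  have uniq: "\<forall>K'\<in>curv_solutions V E. K' = Ks"
  proof
    fix K' assume "K' \<in> curv_solutions V E"
    then have K': "\<forall>i. i \<notin> V \<longrightarrow> K' i = 0" "\<forall>i\<in>V. (\<Sum>j\<in>V. D i j * K' j) = real (card V)"
      by (auto simp: curv_solutions_def mvec_def D_def)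
    have Ks': "\<forall>i. i \<notin> V \<longrightarrow> Ks i = 0" "\<forall>i\<in>V. (\<Sum>j\<in>V. D i j * Ks j) = real (card V)"
      using KsS by (auto simp: curv_solutions_def mvec_def D_def)
    define x where "x = (\<lambda>j. K' j - Ks j)"
    have hx: "(\<Sum>j\<in>V. D i j * x j) = 0" if "i \<in> V" for i
    proof -
      have "(\<Sum>j\<in>V. D i j * x j) = (\<Sum>j\<in>V. D i j * K' j) - (\<Sum>j\<in>V. D i j * Ks j)"
        by (simp add: x_def right_diff_distrib sum_subtractf)
      then show ?thesis using K'(2) Ks'(2) that by simp
    qed
    have h1: "\<forall>i\<in>V1. (\<Sum>j\<in>V1. D1 i j * x j) + (\<Sum>j\<in>V2. (D1 i u + 1 + D2 v j) * x j) = 0"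
    proof
      fix i assume i: "i \<in> V1"
      then have iV: "i \<in> V" by (simp add: V_def)
      show "(\<Sum>j\<in>V1. D1 i j * x j) + (\<Sum>j\<in>V2. (D1 i u + 1 + D2 v j) * x j) = 0"
        using row1[OF i, of x] hx[OF iV] by simp
    qed
    have h2: "\<forall>i\<in>V2. (\<Sum>j\<in>V1. (D2 i v + 1 + D1 u j) * x j) + (\<Sum>j\<in>V2. D2 i j * x j) = 0"
    proof
      fix i assume i: "i \<in> V2"
      then have iV: "i \<in> V" by (simp add: V_def)
      show "(\<Sum>j\<in>V1. (D2 i v + 1 + D1 u j) * x j) + (\<Sum>j\<in>V2. D2 i j * x j) = 0"
        using row2[OF i, of x] hx[OF iV] by simp
    qed
    have "(\<forall>j\<in>V1. x j = 0) \<and> (\<forall>j\<in>V2. x j = 0)"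
      using bridge_hom[OF fin1 fin2 inv1[folded D1_def] inv2[folded D2_def] u v Duu Dvv
          conjunct2[OF C1] conjunct2[OF C2] _ _ detnz[unfolded det_def] k1_def k2_def h1 h2] N1p N2p
      by simp
    then have "\<forall>j\<in>V. K' j = Ks j" by (auto simp: x_def V_def)
    then show "K' = Ks" using K'(1) Ks'(1) by (intro ext) (metis)
  qed
  have cur: "steinerberger_curv V E = Ks" using curv_eq[OF KsS uniq] .
  have KV: "(\<Sum>w\<in>V. steinerberger_curv V E w) = a * k1"
  proof -
    have "(\<Sum>w\<in>V. Ks w) = (\<Sum>w\<in>V1. Ks w) + (\<Sum>w\<in>V2. Ks w)"
      unfolding V_def using fin1 fin2 disj by (rule sum.union_disjoint)
    then show ?thesis using BE(3) cur by simp
  qed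
  have fin: "(\<Sum>w\<in>V. steinerberger_curv V E w) = a / 2 * k1 + b / 2 * k2 \<and>
        a / 2 * k1 + b / 2 * k2 = a * k1 \<and> a * k1 = b * k2"
    using KV ab2 by (simp add: field_simps)
  show ?thesis
    using fin unfolding Let_def a_def b_def Zv_def k1_def k2_def K1_def K2_def N1_def N2_def V_def E_def .
qed


end
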